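(* Let $G$ be a nonempty finite graph on $v$ vertices with $e$ edges, and let $s\ge2$ be an integer. (i) If $e>8D^2v^{1+1/s}$ for some $D>9\pi s/4$, then there exist two vertices $v_0,v_s$ such that $G$ contains more than $D^{2s}/4$ pairwise distinct trails of length $s$ from $v_0$ to $v_s$. (ii) The same conclusion holds if $G$ is bipartite with vertex classes of sizes $m$ and $n$ and $e>4D^2\min(m,n)^{1/s}\max(m,n)$ for some $D>9\pi s/4$.
   Context: A trail of length $s$ from $v_0$ to $v_s$ in a graph is a sequence $(v_0,\dots,v_s)$ of vertices such that $\{v_0,v_1\},\dots,\{v_{s-1},v_s\}$ are pairwise distinct edges of the graph (vertices may repeat). *)

theory Defs
  imports Complex_Main
begin

definition simple_graph :: "'a set \<Rightarrow> 'a set set \<Rightarrow> bool" where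
  "simple_graph V E \<longleftrightarrow> finite V \<and>
     (\<forall>ed\<in>E. \<exists>x y. x \<in> V \<and> y \<in> V \<and> x \<noteq> y \<and> ed = {x, y})"

definition trail :: "'a set set \<Rightarrow> nat \<Rightarrow> 'a list \<Rightarrow> bool" where
  "trail E s p \<longleftrightarrow> length p = s + 1 \<and>
     (\<forall>i<s. {p ! i, p ! Suc i} \<in> E) \<and>
     distinct (map (\<lambda>i. {p ! i, p ! Suc i}) [0..<s])"

definition trails_between :: "'a set set \<Rightarrow> nat \<Rightarrow> 'a \<Rightarrow> 'a \<Rightarrow> 'a list set" where
  "trails_between E s x y = {p. trail E s p \<and> hd p = x \<and> last p = y}"

definition bipartite_with :: "'a set \<Rightarrow> 'a set set \<Rightarrow> 'a set \<Rightarrow> 'a set \<Rightarrow> bool" where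
  "bipartite_with V E A B \<longleftrightarrow> A \<inter> B = {} \<and> A \<union> B = V \<and>
     (\<forall>ed\<in>E. \<exists>x y. x \<in> A \<and> y \<in> B \<and> ed = {x, y})"

end

theory Submission
  imports Defs
begin


definition deg :: "'a set set \<Rightarrow> 'a \<Rightarrow> nat" where
  "deg E u = card {ed\<in>E. u \<in> ed}"

definition TR :: "'a set set \<Rightarrow> nat \<Rightarrow> 'a \<Rightarrow> 'a list set" where
  "TR E j x = {p. trail E j p \<and> hd p = x}"

definition allowed :: "'a set set \<Rightarrow> 'a list \<Rightarrow> 'a set" where
  "allowed E p = {y. {last p, y} \<in> E \<and>
     {last p, y} \<notin> set (map (\<lambda>i. {p ! i, p ! Suc i}) [0..<length p - 1])}"

lemma trail_snoc:
  assumes len: "length p = Suc j"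
  shows "trail E (Suc j) (p @ [y]) \<longleftrightarrow> trail E j p \<and> {last p, y} \<in> E \<and>
     {last p, y} \<notin> set (map (\<lambda>i. {p ! i, p ! Suc i}) [0..<j])"
proof -
  have a: "(p @ [y]) ! i = p ! i" if "i \<le> j" for i using that len by (simp add: nth_append)
  have b: "(p @ [y]) ! Suc j = y" using len by (simp add: nth_append)
  have pne: "p \<noteq> []" using len by auto
  have lp: "last p = p ! j" using len pne by (simp add: last_conv_nth)
  have m: "map (\<lambda>i. {(p @ [y]) ! i, (p @ [y]) ! Suc i}) [0..<Suc j]
      = map (\<lambda>i. {p ! i, p ! Suc i}) [0..<j] @ [{last p, y}]"
    using a b lp by simp
  have e: "(\<forall>i<Suc j. {(p @ [y]) ! i, (p @ [y]) ! Suc i} \<in> E) \<longleftrightarrow>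
        (\<forall>i<j. {p ! i, p ! Suc i} \<in> E) \<and> {last p, y} \<in> E"
    using a b lp by (auto simp: less_Suc_eq)
  have m2: "map (\<lambda>i. {(p @ [y]) ! i, (p @ [y]) ! Suc i}) [0..<j]
      = map (\<lambda>i. {p ! i, p ! Suc i}) [0..<j]"
    using a by simp
  have d: "distinct (map (\<lambda>i. {(p @ [y]) ! i, (p @ [y]) ! Suc i}) [0..<Suc j]) \<longleftrightarrow>
     distinct (map (\<lambda>i. {p ! i, p ! Suc i}) [0..<j]) \<and>
     {last p, y} \<notin> set (map (\<lambda>i. {p ! i, p ! Suc i}) [0..<j])"
    unfolding m by simp
  show ?thesis unfolding trail_def using d e len by auto
qed

lemma TR_0: "TR E 0 x = {[x]}"
  unfolding TR_def trail_def by (auto simp: length_Suc_conv)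

lemma TR_Suc: "TR E (Suc j) x = (\<lambda>(p,y). p @ [y]) ` (SIGMA p:TR E j x. allowed E p)"
proof
  show "TR E (Suc j) x \<subseteq> (\<lambda>(p,y). p @ [y]) ` (SIGMA p:TR E j x. allowed E p)"
  proof
    fix q assume q: "q \<in> TR E (Suc j) x"
    hence len: "length q = Suc (Suc j)" by (simp add: TR_def trail_def)
    hence qne: "q \<noteq> []" by auto
    obtain p y where qd: "q = p @ [y]" using qne by (metis append_butlast_last_id)
    have lp: "length p = Suc j" using len qd by simp
    have "trail E (Suc j) (p @ [y])" using q qd by (simp add: TR_def)
    hence t: "trail E j p \<and> {last p, y} \<in> E \<and>
     {last p, y} \<notin> set (map (\<lambda>i. {p ! i, p ! Suc i}) [0..<j])"
      using trail_snoc[OF lp] by blast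
    have "hd (p @ [y]) = hd p" using lp by (cases p) auto
    hence "hd p = x" using q qd by (simp add: TR_def)
    hence "p \<in> TR E j x" using t by (simp add: TR_def)
    moreover have "y \<in> allowed E p" using t lp by (simp add: allowed_def)
    ultimately have "(p, y) \<in> (SIGMA p:TR E j x. allowed E p)" by simp
    moreover have "q = (\<lambda>(p,y). p @ [y]) (p, y)" using qd by simp
    ultimately show "q \<in> (\<lambda>(p,y). p @ [y]) ` (SIGMA p:TR E j x. allowed E p)"
      by (rule rev_image_eqI)
  qed
next
  show "(\<lambda>(p,y). p @ [y]) ` (SIGMA p:TR E j x. allowed E p) \<subseteq> TR E (Suc j) x"
  proof clarsimp
    fix p y assume p: "p \<in> TR E j x" and y: "y \<in> allowed E p"
    have lp: "length p = Suc j" using p by (simp add: TR_def trail_def)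
    have "trail E (Suc j) (p @ [y])" using trail_snoc[OF lp] p y lp
      by (simp add: TR_def allowed_def)
    moreover have "hd (p @ [y]) = x" using p lp by (cases p) (auto simp: TR_def)
    ultimately show "p @ [y] \<in> TR E (Suc j) x" by (simp add: TR_def)
  qed
qed

lemma allowed_sub: "allowed E p \<subseteq> \<Union>E"
  unfolding allowed_def by blast

lemma finite_TR: "finite (\<Union>E) \<Longrightarrow> finite (TR E j x)"
proof (induction j)
  case 0 then show ?case by (simp add: TR_0)
next
  case (Suc j)
  have "finite (SIGMA p:TR E j x. allowed E p)"
    using Suc finite_subset[OF allowed_sub] by (intro finite_SigmaI) auto
  then show ?case by (simp add: TR_Suc)
qed

lemma edge_in: "simple_graph V E \<Longrightarrow> ed \<in> E \<Longrightarrow> \<exists>a b. a \<in> V \<and> b \<in> V \<and> a \<noteq> b \<and> ed = {a, b}"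
  by (simp add: simple_graph_def)

lemma edge_sub: "simple_graph V E \<Longrightarrow> ed \<in> E \<Longrightarrow> ed \<subseteq> V"
  using edge_in by fastforce

lemma fin_UE:
  assumes G: "simple_graph V E"
  shows "finite (\<Union>E)"
proof -
  have "\<Union>E \<subseteq> V" using edge_sub[OF G] by blast
  moreover have "finite V" using G by (simp add: simple_graph_def)
  ultimately show ?thesis by (rule finite_subset)
qed

lemma card_nb:
  assumes G: "simple_graph V E"
  shows "card {y. {u, y} \<in> E} = deg E u"
proof -
  have fin: "finite V" using G by (simp add: simple_graph_def)
  have fu: "finite (\<Union>E)" using fin_UE[OF G] .
  have inj: "inj_on (\<lambda>y. {u, y}) {y. {u, y} \<in> E}"
    by (rule inj_onI) (auto simp: doubleton_eq_iff)
  have img: "(\<lambda>y. {u, y}) ` {y. {u, y} \<in> E} = {ed\<in>E. u \<in> ed}"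
  proof
    show "{ed \<in> E. u \<in> ed} \<subseteq> (\<lambda>y. {u, y}) ` {y. {u, y} \<in> E}"
    proof
      fix ed assume ed: "ed \<in> {ed \<in> E. u \<in> ed}"
      then obtain a b where ab: "ed = {a, b}" using edge_in[OF G] by blast
      show "ed \<in> (\<lambda>y. {u, y}) ` {y. {u, y} \<in> E}"
      proof (cases "u = a")
        case True thus ?thesis using ed ab by auto
      next
        case False then have "u = b" using ed ab by auto
        thus ?thesis using ed ab by (auto simp: insert_commute)
      qed
    qed
  qed auto
  show ?thesis unfolding deg_def using card_image[OF inj] img by simp
qed

lemma card_allowed:
  assumes G: "simple_graph V E" and p: "trail E j p"
  shows "card (allowed E p) \<ge> deg E (last p) - j"
proof -
  let ?u = "last p"
  let ?L = "map (\<lambda>i. {p ! i, p ! Suc i}) [0..<length p - 1]"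
  let ?N = "{y. {?u, y} \<in> E}"
  let ?R = "{y. {?u, y} \<in> set ?L}"
  have lp: "length p = Suc j" using p by (simp add: trail_def)
  have eq: "allowed E p = ?N - ?R" unfolding allowed_def by auto
  have inj: "inj_on (\<lambda>y. {?u, y}) ?R"
    by (rule inj_onI) (auto simp: doubleton_eq_iff)
  have "card ?R = card ((\<lambda>y. {?u, y}) ` ?R)" using card_image[OF inj] by simp
  also have "\<dots> \<le> card (set ?L)" by (rule card_mono) (simp, blast)
  also have "\<dots> \<le> length ?L" by (rule card_length)
  also have "\<dots> = j" using lp by simp
  finally have R: "card ?R \<le> j" .
  have fu: "finite (\<Union>E)" using fin_UE[OF G] .
  have fN: "finite ?N" by (rule finite_subset[OF _ fu]) auto
  have "card ?N - card ?R \<le> card (?N - ?R)" 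
  proof (rule diff_card_le_card_Diff)
    have LE: "set ?L \<subseteq> E" using p lp by (auto simp: trail_def)
    show "finite ?R" by (rule finite_subset[OF _ fN]) (use LE in blast)
  qed
  moreover have "deg E ?u - j \<le> card ?N - card ?R" using R card_nb[OF G, of ?u] by linarith
  ultimately have "deg E ?u - j \<le> card (?N - ?R)" by (rule order_trans[rotated])
  thus ?thesis by (simp only: eq)
qed

lemma trail_last_in:
  assumes G: "simple_graph V E" and p: "trail E j p" and j: "j \<ge> 1"
  shows "last p \<in> V"
proof -
  have lp: "length p = Suc j" using p by (simp add: trail_def)
  obtain i where i: "j = Suc i" using j by (cases j) auto
  have "{p ! i, p ! Suc i} \<in> E" using p i by (simp add: trail_def)
  hence "p ! Suc i \<in> V" using edge_sub[OF G] by blast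
  moreover have "p \<noteq> []" using lp by auto
  hence "last p = p ! Suc i" using lp i by (simp add: last_conv_nth)
  ultimately show ?thesis by simp
qed

lemma count_TR:
  assumes G: "simple_graph V E" and x: "x \<in> V" and k: "\<forall>u\<in>V. k \<le> deg E u"
  shows "j \<le> s \<Longrightarrow> (k - s) ^ j \<le> card (TR E j x)"
proof (induction j)
  case 0 then show ?case by (simp add: TR_0)
next
  case (Suc j)
  have fu: "finite (\<Union>E)" using fin_UE[OF G] .
  have fT: "finite (TR E j x)" using finite_TR[OF fu] .
  have inj: "inj_on (\<lambda>(p,y). p @ [y]) (SIGMA p:TR E j x. allowed E p)"
    by (rule inj_onI) auto
  have "card (TR E (Suc j) x) = card (SIGMA p:TR E j x. allowed E p)"
    unfolding TR_Suc using card_image[OF inj] by simp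
  also have "\<dots> = (\<Sum>p\<in>TR E j x. card (allowed E p))"
    using fT finite_subset[OF allowed_sub fu] by (simp add: card_SigmaI)
  also have "\<dots> \<ge> (\<Sum>p\<in>TR E j x. k - s)"
  proof (rule sum_mono)
    fix p assume p: "p \<in> TR E j x"
    have tp: "trail E j p" using p by (simp add: TR_def)
    have "last p \<in> V"
    proof (cases j)
      case 0 then show ?thesis using p x by (simp add: TR_0)
    next
      case (Suc i) then show ?thesis using trail_last_in[OF G tp] by simp
    qed
    hence "k \<le> deg E (last p)" using k by simp
    thus "k - s \<le> card (allowed E p)" using card_allowed[OF G tp] Suc.prems by linarith
  qed
  finally have c1: "card (TR E j x) * (k - s) \<le> card (TR E (Suc j) x)" by simp
  have c2: "(k - s) ^ j \<le> card (TR E j x)" using Suc by simp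
  have "(k - s) ^ Suc j = (k - s) ^ j * (k - s)" by simp
  also have "\<dots> \<le> card (TR E j x) * (k - s)" using c2 by (rule mult_le_mono1)
  finally have "(k - s) ^ Suc j \<le> card (TR E j x) * (k - s)" .
  then show ?case using c1 by (rule order_trans)
qed



lemma fin_E: "simple_graph V E \<Longrightarrow> finite E"
proof -
  assume G: "simple_graph V E"
  have "E \<subseteq> Pow V" using edge_sub[OF G] by blast
  moreover have "finite V" using G by (simp add: simple_graph_def)
  ultimately show ?thesis by (meson finite_Pow_iff finite_subset)
qed

lemma dense_sub:
  "finite V \<Longrightarrow> simple_graph V E \<Longrightarrow> c \<ge> 0 \<Longrightarrow> real (card E) > c * real (card V) \<Longrightarrow>
   \<exists>V' E'. V' \<subseteq> V \<and> E' \<subseteq> E \<and> V' \<noteq> {} \<and> simple_graph V' E' \<and> (\<forall>u\<in>V'. real (deg E' u) > c)"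
proof (induction "card V" arbitrary: V E rule: less_induct)
  case less
  note G = less.prems(2)
  show ?case
  proof (cases "\<forall>u\<in>V. real (deg E u) > c")
    case True
    have "V \<noteq> {}"
    proof
      assume V0: "V = {}"
      have "E \<noteq> {}" using less.prems(4) V0 by auto
      then obtain ed where ed: "ed \<in> E" by blast
      then obtain a b where "a \<in> V" using edge_in[OF G] by blast
      thus False using V0 by simp
    qed
    thus ?thesis using True G by blast
  next
    case False
    then obtain u where u: "u \<in> V" and du: "real (deg E u) \<le> c" by force
    define V0 where "V0 = V - {u}"
    define E0 where "E0 = {ed\<in>E. u \<notin> ed}"
    have fE: "finite E" using fin_E[OF G] .
    have split: "E = E0 \<union> {ed\<in>E. u \<in> ed}" unfolding E0_def by blast
    have "card E = card E0 + card {ed\<in>E. u \<in> ed}"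
      by (subst split, rule card_Un_disjoint) (use fE in \<open>auto simp: E0_def\<close>)
    hence cE: "card E = card E0 + deg E u" by (simp add: deg_def)
    have "card V > 0" using u less.prems(1) by (auto simp: card_gt_0_iff)
    hence c1: "card V \<ge> 1" by simp
    have cV: "real (card V0) = real (card V) - 1" using u less.prems(1) c1 by (simp add: V0_def of_nat_diff)
    have "real (card E0) > c * real (card V0)"
    proof -
      have "c * real (card V) = c * (real (card V0) + 1)" using cV by simp
      also have "\<dots> = c + c * real (card V0)" by (simp add: algebra_simps)
      finally have "c * real (card V) = c + c * real (card V0)" .
      moreover have "real (card E) = real (card E0) + real (deg E u)" using cE by simp
      ultimately show ?thesis using du less.prems(4) by linarith
    qed
    moreover have "simple_graph V0 E0"
      unfolding simple_graph_def
    proof (intro conjI ballI)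
      show "finite V0" using less.prems(1) by (simp add: V0_def)
      fix ed assume ed: "ed \<in> E0"
      then obtain a b where ab: "a \<in> V" "b \<in> V" "a \<noteq> b" "ed = {a, b}"
        using edge_in[OF G, of ed] ed unfolding E0_def by blast
      have "u \<notin> ed" using ed by (simp add: E0_def)
      thus "\<exists>x y. x \<in> V0 \<and> y \<in> V0 \<and> x \<noteq> y \<and> ed = {x, y}" using ab by (auto simp: V0_def)
    qed
    moreover have "card V0 < card V" using c1 u less.prems(1) by (simp add: V0_def)
    moreover have "finite V0" using less.prems(1) by (simp add: V0_def)
    ultimately have "\<exists>V' E'. V' \<subseteq> V0 \<and> E' \<subseteq> E0 \<and> V' \<noteq> {} \<and> simple_graph V' E' \<and> (\<forall>u\<in>V'. real (deg E' u) > c)"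
      using less.hyps less.prems(3) by presburger
    then obtain V' E' where r: "V' \<subseteq> V0 \<and> E' \<subseteq> E0 \<and> V' \<noteq> {} \<and> simple_graph V' E' \<and> (\<forall>u\<in>V'. real (deg E' u) > c)"
      by blast
    have s1: "V0 \<subseteq> V" by (auto simp: V0_def)
    have s2: "E0 \<subseteq> E" by (auto simp: E0_def)
    from r have "V' \<subseteq> V \<and> E' \<subseteq> E \<and> V' \<noteq> {} \<and> simple_graph V' E' \<and> (\<forall>u\<in>V'. real (deg E' u) > c)"
      using s1 s2 by (meson order_trans)
    thus ?thesis by blast
  qed
qed

lemma bip_parity:
  assumes XY: "X \<inter> Y = {}" and E: "\<forall>ed\<in>E. \<exists>a b. a \<in> X \<and> b \<in> Y \<and> ed = {a, b}"
    and p: "trail E j p" and p0: "p ! 0 \<in> X"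
  shows "i \<le> j \<Longrightarrow> (even i \<longrightarrow> p ! i \<in> X) \<and> (odd i \<longrightarrow> p ! i \<in> Y)"
proof (induction i)
  case 0 then show ?case using p0 by simp
next
  case (Suc i)
  have ij: "i < j" using Suc.prems by simp
  have IH: "(even i \<longrightarrow> p ! i \<in> X) \<and> (odd i \<longrightarrow> p ! i \<in> Y)" using Suc by simp
  have "{p ! i, p ! Suc i} \<in> E" using p ij by (simp add: trail_def)
  then obtain a b where ab: "a \<in> X" "b \<in> Y" "{p ! i, p ! Suc i} = {a, b}" using E by blast
  have ab': "(p ! i = a \<and> p ! Suc i = b) \<or> (p ! i = b \<and> p ! Suc i = a)"
    using ab(3) by (simp add: doubleton_eq_iff)
  show ?case
  proof (cases "even i")
    case True
    then have "p ! i \<in> X" using IH by simp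
    then have "p ! i \<noteq> b" using ab(2) XY by blast
    then have "p ! Suc i = b" using ab' by blast
    then show ?thesis using True ab(2) by simp
  next
    case False
    then have "p ! i \<in> Y" using IH by simp
    then have "p ! i \<noteq> a" using ab(1) XY by blast
    then have "p ! Suc i = a" using ab' by blast
    then show ?thesis using False ab(1) by simp
  qed
qed

lemma pigeon:
  assumes "finite Y" "Y \<noteq> {}" "finite T" "T \<subseteq> (\<Union>y\<in>Y. S y)" "\<forall>y\<in>Y. finite (S y)"
  shows "\<exists>y\<in>Y. card T \<le> card Y * card (S y)"
proof (rule ccontr)
  assume "\<not> ?thesis"
  hence lt: "\<forall>y\<in>Y. card Y * card (S y) < card T" by auto
  have "card T \<le> card (\<Union>y\<in>Y. S y)"
    using assms by (intro card_mono) auto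
  also have "\<dots> \<le> (\<Sum>y\<in>Y. card (S y))" using assms(1) by (rule card_UN_le)
  finally have "card Y * card T \<le> card Y * (\<Sum>y\<in>Y. card (S y))" by simp
  also have "\<dots> = (\<Sum>y\<in>Y. card Y * card (S y))" by (simp add: sum_distrib_left)
  also have "\<dots> < (\<Sum>y\<in>Y. card T)" using assms(1,2) lt by (intro sum_strict_mono) auto
  also have "\<dots> = card Y * card T" by simp
  finally show False by simp
qed

lemma trail_mono: "trail E' s p \<Longrightarrow> E' \<subseteq> E \<Longrightarrow> trail E s p"
  unfolding trail_def by auto

lemma final_core:
  assumes G: "simple_graph V E" and G': "simple_graph V' E'" and sub: "E' \<subseteq> E"
    and x: "x \<in> V'" and k: "\<forall>u\<in>V'. k \<le> deg E' u" and Y: "Y \<subseteq> V'" "Y \<noteq> {}"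
    and ends: "\<forall>p\<in>TR E' s x. last p \<in> Y"
  shows "\<exists>y\<in>Y. (k - s) ^ s \<le> card Y * card (trails_between E s x y)"
proof -
  have fY: "finite Y" using Y(1) G' finite_subset by (auto simp: simple_graph_def)
  have fT: "finite (TR E' s x)" using finite_TR[OF fin_UE[OF G']] .
  have sub2: "TR E' s x \<subseteq> (\<Union>y\<in>Y. trails_between E s x y)"
  proof
    fix p assume p: "p \<in> TR E' s x"
    hence "trail E s p" "hd p = x" using trail_mono sub by (auto simp: TR_def)
    moreover have "last p \<in> Y" using ends p by blast
    ultimately show "p \<in> (\<Union>y\<in>Y. trails_between E s x y)" by (auto simp: trails_between_def)
  qed
  have fS: "\<forall>y\<in>Y. finite (trails_between E s x y)"
  proof
    fix y
    have "trails_between E s x y \<subseteq> TR E s x" by (auto simp: trails_between_def TR_def)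
    thus "finite (trails_between E s x y)" using finite_TR[OF fin_UE[OF G]] finite_subset by blast
  qed
  obtain y where y: "y \<in> Y" "card (TR E' s x) \<le> card Y * card (trails_between E s x y)"
    using pigeon[OF fY Y(2) fT sub2 fS] by blast
  have c: "(k - s) ^ s \<le> card (TR E' s x)" using count_TR[OF G' x k] by simp
  have "(k - s) ^ s \<le> card Y * card (trails_between E s x y)" using c y(2) by (rule order_trans)
  thus ?thesis using y(1) by blast
qed

lemma arith_final:
  fixes k s cY t :: nat and L Q N :: real
  assumes "real k \<ge> 2 * L" "L \<ge> real s" "L ^ s \<ge> Q * N" "N \<ge> real cY" "cY \<ge> 1" "Q > 0"
    "(k - s) ^ s \<le> cY * t"
  shows "real t \<ge> Q"
proof -
  have ks: "s \<le> k" using assms(1,2) by linarith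
  have "real (k - s) \<ge> L" using ks assms(1,2) by (simp add: of_nat_diff)
  moreover have L0: "L \<ge> 0" using assms(2) by simp
  ultimately have "L ^ s \<le> real (k - s) ^ s" by (intro power_mono) auto
  also have "\<dots> \<le> real cY * real t" using assms(7) by (metis of_nat_le_iff of_nat_mult of_nat_power)
  finally have f: "L ^ s \<le> real cY * real t" .
  have "Q * real cY \<le> Q * N" using assms(4,6) by (simp add: mult_left_mono)
  hence "real cY * Q \<le> real cY * real t" using f assms(3) by (simp add: mult.commute)
  moreover have "real cY > 0" using assms(5) by simp
  ultimately show ?thesis by (simp add: mult_le_cancel_left_pos)
qed



lemma deg_ge_k:
  assumes "real d > c" shows "nat \<lceil>c\<rceil> \<le> d"
proof -
  have "c \<le> real d" using assms by simp
  hence "\<lceil>c\<rceil> \<le> int d" by (simp add: ceiling_le_iff)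
  thus ?thesis by (metis nat_int nat_mono)
qed

lemma nat_ceil_ge: "real (nat \<lceil>c\<rceil>) \<ge> c"
  by linarith

lemma powr_facts:
  fixes v :: nat and s :: nat
  assumes "v \<ge> 1" "s \<ge> 1"
  shows "real v powr (1 / real s) \<ge> 1" "(real v powr (1 / real s)) ^ s = real v"
proof -
  show "real v powr (1 / real s) \<ge> 1" using assms by (intro ge_one_powr_ge_zero) auto
  have "(real v powr (1 / real s)) ^ s = real v powr (real s * (1 / real s))"
    using assms by (subst powr_power) auto
  also have "\<dots> = real v" using assms by simp
  finally show "(real v powr (1 / real s)) ^ s = real v" .
qed

lemma D_big:
  fixes D :: real assumes "D > 9 * pi * real s / 4" "s \<ge> 2"
  shows "D \<ge> real s" "D ^ 2 \<ge> real s" "D > 0"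
proof -
  have "9 * pi * real s / 4 \<ge> real s" using pi_ge_two assms(2) by (simp add: field_simps)
  thus "D \<ge> real s" using assms(1) by linarith
  thus "D > 0" using assms(2) by linarith
  have "real s \<le> real s * real s" using assms(2) by simp
  also have "\<dots> \<le> D * D" using \<open>D \<ge> real s\<close> by (intro mult_mono) auto
  finally show "D ^ 2 \<ge> real s" by (simp add: power2_eq_square)
qed

lemma part1:
  fixes V :: "'a set" and E :: "'a set set" and s :: nat and D :: real
  assumes G: "simple_graph V E" and nonempty: "V \<noteq> {}" and s2: "s \<ge> 2"
    and D: "D > 9 * pi * real s / 4"
    and e: "real (card E) > 8 * D\<^sup>2 * real (card V) powr (1 + 1 / real s)"
  shows "\<exists>x\<in>V. \<exists>y\<in>V. real (card (trails_between E s x y)) > D ^ (2 * s) / 4"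
proof -
  define v where "v = card V"
  have fV: "finite V" using G by (simp add: simple_graph_def)
  have v1: "v \<ge> 1" using fV nonempty by (simp add: v_def Suc_le_eq card_gt_0_iff)
  define a where "a = real v powr (1 / real s)"
  have a1: "a \<ge> 1" and as: "a ^ s = real v" using powr_facts[OF v1] s2 by (auto simp: a_def)
  have Ds: "D \<ge> real s" "D ^ 2 \<ge> real s" "D > 0" using D_big[OF D s2] by auto
  define c where "c = 8 * D\<^sup>2 * a"
  have pw: "real v powr (1 + 1 / real s) = real v * a"
    using v1 by (simp add: a_def powr_add)
  have c0: "c \<ge> 0" using a1 by (simp add: c_def)
  have ce: "real (card E) > c * real (card V)" using e pw by (simp add: c_def v_def algebra_simps)
  obtain V' E' where r: "V' \<subseteq> V" "E' \<subseteq> E" "V' \<noteq> {}" "simple_graph V' E'"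
    "\<forall>u\<in>V'. real (deg E' u) > c"
    using dense_sub[OF fV G c0 ce] by blast
  define k where "k = nat \<lceil>c\<rceil>"
  have kd: "\<forall>u\<in>V'. k \<le> deg E' u" using r(5) deg_ge_k unfolding k_def by blast
  have kc: "real k \<ge> c" unfolding k_def by (rule nat_ceil_ge)
  obtain x where x: "x \<in> V'" using r(3) by blast
  have ends: "\<forall>p\<in>TR E' s x. last p \<in> V'"
    using trail_last_in[OF r(4)] s2 by (auto simp: TR_def)
  obtain y where y: "y \<in> V'" "(k - s) ^ s \<le> card V' * card (trails_between E s x y)"
    using final_core[OF G r(4) r(2) x kd order_refl r(3) ends] by blast
  have fV': "finite V'" using r(1) fV finite_subset by blast
  have cV': "card V' \<le> v" using card_mono[OF fV r(1)] by (simp add: v_def)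
  have cV'1: "card V' \<ge> 1" using fV' r(3) by (simp add: Suc_le_eq card_gt_0_iff)
  define L where "L = 4 * D\<^sup>2 * a"
  have L1: "real k \<ge> 2 * L" using kc by (simp add: L_def c_def)
  have L2: "L \<ge> real s"
  proof -
    have "D\<^sup>2 \<le> 4 * D\<^sup>2 * a" using a1 Ds(3) by (simp add: mult_le_cancel_left1 algebra_simps)
    thus ?thesis using Ds(2) by (simp add: L_def)
  qed
  have L3: "L ^ s \<ge> D ^ (2 * s) * real v"
  proof -
    have "L ^ s = 4 ^ s * (D\<^sup>2) ^ s * a ^ s" by (simp add: L_def power_mult_distrib)
    also have "\<dots> = 4 ^ s * (D ^ (2 * s) * real v)" using as by (simp add: power_mult)
    also have "\<dots> \<ge> D ^ (2 * s) * real v"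
    proof -
      have X0: "D ^ (2 * s) * real v \<ge> 0" using Ds(3) by simp
      have "(1::real) \<le> 4 ^ s" by simp
      from mult_right_mono[OF this X0] show ?thesis by simp
    qed
    finally show ?thesis .
  qed
  have "real (card (trails_between E s x y)) \<ge> D ^ (2 * s)"
    by (rule arith_final[OF L1 L2 L3 _ cV'1 _ y(2)]) (use cV' Ds(3) in auto)
  moreover have "D ^ (2 * s) / 4 < D ^ (2 * s)" using Ds(3) by simp
  ultimately show ?thesis using x y(1) r(1) by force
qed



lemma part2_core:
  fixes V :: "'a set" and E :: "'a set set" and s :: nat and D :: real
  assumes G: "simple_graph V E" and s2: "s \<ge> 2"
    and D: "D > 9 * pi * real s / 4"
    and CO: "C \<inter> Ot = {}" "C \<union> Ot = V"
    and EC: "\<forall>ed\<in>E. \<exists>a b. a \<in> C \<and> b \<in> Ot \<and> ed = {a, b}"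
    and le: "card C \<le> card Ot"
    and e: "real (card E) > 4 * D\<^sup>2 * real (card C) powr (1 / real s) * real (card Ot)"
  shows "\<exists>x\<in>V. \<exists>y\<in>V. real (card (trails_between E s x y)) > D ^ (2 * s) / 4"
proof -
  have EO: "\<forall>ed\<in>E. \<exists>a b. a \<in> Ot \<and> b \<in> C \<and> ed = {a, b}"
    using EC by (metis insert_commute)
  have fV: "finite V" using G by (simp add: simple_graph_def)
  have fC: "finite C" "finite Ot" using CO(2) fV finite_subset by auto
  have cV: "card V = card C + card Ot" using CO fC card_Un_disjoint by metis
  have C1: "card C \<ge> 1"
  proof (rule ccontr)
    assume "\<not> card C \<ge> 1"
    hence "C = {}" using fC(1) by (simp add: not_less_eq_eq)
    moreover hence "E = {}" using EC by blast
    ultimately show False using e by simp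
  qed
  define a where "a = real (card C) powr (1 / real s)"
  have a1: "a \<ge> 1" and as: "a ^ s = real (card C)" using powr_facts[OF C1] s2 by (auto simp: a_def)
  have Ds: "D \<ge> real s" "D ^ 2 \<ge> real s" "D > 0" using D_big[OF D s2] by auto
  define c where "c = 2 * D\<^sup>2 * a"
  have c0: "c \<ge> 0" using a1 by (simp add: c_def)
  have ce: "real (card E) > c * real (card V)"
  proof -
    have "real (card V) \<le> 2 * real (card Ot)" using cV le by simp
    hence "c * real (card V) \<le> c * (2 * real (card Ot))" using c0 by (rule mult_left_mono)
    also have "\<dots> = 4 * D\<^sup>2 * a * real (card Ot)" by (simp add: c_def)
    finally show ?thesis using e by (simp add: a_def)
  qed
  obtain V' E' where r: "V' \<subseteq> V" "E' \<subseteq> E" "V' \<noteq> {}" "simple_graph V' E'"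
    "\<forall>u\<in>V'. real (deg E' u) > c"
    using dense_sub[OF fV G c0 ce] by blast
  have EC': "\<forall>ed\<in>E'. \<exists>a b. a \<in> C \<and> b \<in> Ot \<and> ed = {a, b}" using EC r(2) by blast
  have EO': "\<forall>ed\<in>E'. \<exists>a b. a \<in> Ot \<and> b \<in> C \<and> ed = {a, b}" using EO r(2) by blast
  define k where "k = nat \<lceil>c\<rceil>"
  have kd: "\<forall>u\<in>V'. k \<le> deg E' u" using r(5) deg_ge_k unfolding k_def by blast
  have kc: "real k \<ge> c" unfolding k_def by (rule nat_ceil_ge)
  obtain u where u: "u \<in> V'" using r(3) by blast
  have "real (deg E' u) > 0" using r(5) u c0 by fastforce
  hence "{ed\<in>E'. u \<in> ed} \<noteq> {}" unfolding deg_def by (metis card.empty of_nat_0 less_irrefl)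
  then obtain ed where ed: "ed \<in> E'" by blast
  then obtain a0 b0 where ab: "a0 \<in> C" "b0 \<in> Ot" "ed = {a0, b0}" using EC' by blast
  have "ed \<subseteq> V'" using edge_sub[OF r(4) ed] .
  hence aV: "a0 \<in> V' \<inter> C" and bV: "b0 \<in> V' \<inter> Ot" using ab by auto
  define x where "x = (if even s then a0 else b0)"
  have xV: "x \<in> V'" using aV bV by (simp add: x_def)
  have ends: "\<forall>p\<in>TR E' s x. last p \<in> V' \<inter> C"
  proof
    fix p assume p: "p \<in> TR E' s x"
    have tp: "trail E' s p" and hp: "hd p = x" using p by (auto simp: TR_def)
    have lp: "length p = Suc s" using tp by (simp add: trail_def)
    have pne: "p \<noteq> []" using lp by auto
    have p0: "p ! 0 = x" using hp pne by (simp add: hd_conv_nth)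
    have lst: "last p = p ! s" using pne lp by (simp add: last_conv_nth)
    have inV: "last p \<in> V'" using trail_last_in[OF r(4) tp] s2 by simp
    have "p ! s \<in> C"
    proof (cases "even s")
      case True
      hence "p ! 0 \<in> C" using p0 aV by (simp add: x_def)
      thus ?thesis using bip_parity[OF CO(1) EC' tp, of s] True by simp
    next
      case False
      hence "p ! 0 \<in> Ot" using p0 bV by (simp add: x_def)
      moreover have "Ot \<inter> C = {}" using CO(1) by blast
      ultimately show ?thesis using bip_parity[OF _ EO' tp, of s] False by simp
    qed
    thus "last p \<in> V' \<inter> C" using inV lst by simp
  qed
  have Yne: "V' \<inter> C \<noteq> {}" using aV by blast
  obtain y where y: "y \<in> V' \<inter> C" "(k - s) ^ s \<le> card (V' \<inter> C) * card (trails_between E s x y)"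
    using final_core[OF G r(4) r(2) xV kd _ Yne ends] by blast
  have cY: "card (V' \<inter> C) \<le> card C" using fC by (intro card_mono) auto
  have cY1: "card (V' \<inter> C) \<ge> 1" using fC Yne by (simp add: Suc_le_eq card_gt_0_iff)
  define L where "L = D\<^sup>2 * a"
  have L1: "real k \<ge> 2 * L" using kc by (simp add: L_def c_def)
  have L2: "L \<ge> real s"
  proof -
    have "D\<^sup>2 \<le> D\<^sup>2 * a" using a1 Ds(3) by (simp add: mult_le_cancel_left1 algebra_simps)
    thus ?thesis using Ds(2) by (simp add: L_def)
  qed
  have L3: "L ^ s \<ge> D ^ (2 * s) * real (card C)"
    using as by (simp add: L_def power_mult_distrib power_mult)
  have "real (card (trails_between E s x y)) \<ge> D ^ (2 * s)"
    by (rule arith_final[OF L1 L2 L3 _ cY1 _ y(2)]) (use cY Ds(3) in auto)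
  moreover have "D ^ (2 * s) / 4 < D ^ (2 * s)" using Ds(3) by simp
  moreover have "x \<in> V" "y \<in> V" using xV y(1) r(1) by auto
  ultimately show ?thesis by force
qed

lemma part2:
  fixes V :: "'a set" and E :: "'a set set" and s :: nat and D :: real
  assumes G: "simple_graph V E" and s2: "s \<ge> 2"
    and bw: "bipartite_with V E A B" and D: "D > 9 * pi * real s / 4"
    and e: "real (card E) > 4 * D\<^sup>2 * real (min (card A) (card B)) powr (1 / real s)
                          * real (max (card A) (card B))"
  shows "\<exists>x\<in>V. \<exists>y\<in>V. real (card (trails_between E s x y)) > D ^ (2 * s) / 4"
proof (cases "card A \<le> card B")
  case True
  have "A \<inter> B = {}" "A \<union> B = V" "\<forall>ed\<in>E. \<exists>a b. a \<in> A \<and> b \<in> B \<and> ed = {a, b}"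
    using bw by (auto simp: bipartite_with_def)
  thus ?thesis using part2_core[OF G s2 D, of A B] True e by simp
next
  case False
  have "B \<inter> A = {}" "B \<union> A = V" "\<forall>ed\<in>E. \<exists>a b. a \<in> B \<and> b \<in> A \<and> ed = {a, b}"
    using bw unfolding bipartite_with_def by (auto, metis insert_commute)
  thus ?thesis using part2_core[OF G s2 D, of B A] False e by simp
qed

theorem theorem5p3:
  fixes V :: "'a set" and E :: "'a set set" and s :: nat
  assumes G: "simple_graph V E" and nonempty: "V \<noteq> {}" and s2: "s \<ge> 2"
  shows
    "(\<forall>D::real. D > 9 * pi * real s / 4 \<longrightarrow>
        real (card E) > 8 * D\<^sup>2 * real (card V) powr (1 + 1 / real s) \<longrightarrow>
        (\<exists>x\<in>V. \<exists>y\<in>V. real (card (trails_between E s x y)) > D ^ (2 * s) / 4))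
     \<and>
     (\<forall>A B (D::real). bipartite_with V E A B \<longrightarrow> D > 9 * pi * real s / 4 \<longrightarrow>
        real (card E) > 4 * D\<^sup>2 * real (min (card A) (card B)) powr (1 / real s)
                          * real (max (card A) (card B)) \<longrightarrow>
        (\<exists>x\<in>V. \<exists>y\<in>V. real (card (trails_between E s x y)) > D ^ (2 * s) / 4))"
  using part1[OF G nonempty s2] part2[OF G s2] by blast

end
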